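(* Let $E$ and $F$ be Banach lattices. If each weak Dunford–Pettis operator from $E$ into $F$ is uaw-Dunford–Pettis, then the norm of $E'$ is order continuous or the norm of $F$ is order continuous.
   Context: All operators are continuous linear operators. A net $(x_\alpha)$ in a Banach lattice $E$ is uaw-convergent to $x$ (written $x_\alpha\xrightarrow{uaw}x$) if $|x_\alpha-x|\wedge u\to 0$ weakly for every $u\in E_+$. An operator $T$ from a Banach lattice $E$ into a Banach space $X$ is uaw-Dunford–Pettis if for every norm bounded sequence $(x_n)$ in $E$ with $x_n\xrightarrow{uaw}0$ one has $\|Tx_n\|\to 0$. An operator $T:X\to Y$ between Banach spaces is weak Dunford–Pettis if $f_n(Tx_n)\to 0$ for every weakly null sequence $(x_n)$ in $X$ and every weakly null sequence $(f_n)$ in $Y'$. *)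

theory Defs
  imports "HOL-Analysis.Analysis"
begin

class banach_lattice = banach + ordered_real_vector + lattice +
  assumes norm_lattice_mono:
    "sup x (- x) \<le> sup y (- y) \<Longrightarrow> norm x \<le> norm y"

definition lat_abs :: "'a::banach_lattice \<Rightarrow> 'a" where
  "lat_abs x = sup x (- x)"

definition weakly_null :: "(nat \<Rightarrow> 'a::real_normed_vector) \<Rightarrow> bool" where
  "weakly_null x \<longleftrightarrow> (\<forall>f :: 'a \<Rightarrow>\<^sub>L real. (\<lambda>n. blinfun_apply f (x n)) \<longlonglongrightarrow> 0)"

definition uaw_null :: "(nat \<Rightarrow> 'a::banach_lattice) \<Rightarrow> bool" where
  "uaw_null x \<longleftrightarrow> (\<forall>u. 0 \<le> u \<longrightarrow> weakly_null (\<lambda>n. inf (lat_abs (x n)) u))"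

definition uaw_DP :: "('a::banach_lattice \<Rightarrow>\<^sub>L 'b::real_normed_vector) \<Rightarrow> bool" where
  "uaw_DP T \<longleftrightarrow> (\<forall>x :: nat \<Rightarrow> 'a. bounded (range x) \<and> uaw_null x \<longrightarrow>
      (\<lambda>n. norm (blinfun_apply T (x n))) \<longlonglongrightarrow> 0)"

definition weak_DP :: "('a::real_normed_vector \<Rightarrow>\<^sub>L 'b::real_normed_vector) \<Rightarrow> bool" where
  "weak_DP T \<longleftrightarrow> (\<forall>(x :: nat \<Rightarrow> 'a) (f :: nat \<Rightarrow> ('b \<Rightarrow>\<^sub>L real)).
      weakly_null x \<and> weakly_null f \<longrightarrow>
      (\<lambda>n. blinfun_apply (f n) (blinfun_apply T (x n))) \<longlonglongrightarrow> 0)"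

text \<open>Order continuity of a norm w.r.t. an order relation le: every downward directed set
  with infimum 0 (i.e. a net decreasing to 0) has infimum of norms 0.\<close>
definition oc_norm_rel :: "('a::real_normed_vector \<Rightarrow> 'a \<Rightarrow> bool) \<Rightarrow> bool" where
  "oc_norm_rel le \<longleftrightarrow> (\<forall>D. D \<noteq> {} \<and> (\<forall>x\<in>D. \<forall>y\<in>D. \<exists>z\<in>D. le z x \<and> le z y)
      \<and> (\<forall>x\<in>D. le 0 x) \<and> (\<forall>l. (\<forall>x\<in>D. le l x) \<longrightarrow> le l 0)
      \<longrightarrow> (\<forall>e>0. \<exists>x\<in>D. norm x < e))"

definition dual_le :: "('a::banach_lattice \<Rightarrow>\<^sub>L real) \<Rightarrow> ('a \<Rightarrow>\<^sub>L real) \<Rightarrow> bool" where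
  "dual_le f g \<longleftrightarrow> (\<forall>x. 0 \<le> x \<longrightarrow> blinfun_apply f x \<le> blinfun_apply g x)"

abbreviation order_continuous_norm :: "'a::banach_lattice itself \<Rightarrow> bool" where
  "order_continuous_norm _ \<equiv> oc_norm_rel ((\<le>) :: 'a \<Rightarrow> 'a \<Rightarrow> bool)"

abbreviation dual_order_continuous_norm :: "'a::banach_lattice itself \<Rightarrow> bool" where
  "dual_order_continuous_norm _ \<equiv> oc_norm_rel (dual_le :: ('a \<Rightarrow>\<^sub>L real) \<Rightarrow> _ \<Rightarrow> bool)"

end

theory Submission
  imports Defs "HOL-Library.Lattice_Algebras"
begin
context banach_lattice begin
subclass lattice_ab_group_add ..
end

lemma abs_nonneg: "0 \<le> lat_abs (x::'a::banach_lattice)"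
proof -
  have "x + (- x) \<le> lat_abs x + lat_abs x"
    unfolding lat_abs_def by (intro add_mono) auto
  then show ?thesis by simp
qed

lemma abs_ge: "x \<le> lat_abs (x::'a::banach_lattice)" "- x \<le> lat_abs x"
  unfolding lat_abs_def by auto

lemma abs_pos: "0 \<le> (x::'a::banach_lattice) \<Longrightarrow> lat_abs x = x"
  unfolding lat_abs_def
  by (metis neg_le_0_iff_le order_trans sup.absorb1)

lemma abs_le: "x \<le> S \<Longrightarrow> - x \<le> S \<Longrightarrow> lat_abs (x::'a::banach_lattice) \<le> S"
  unfolding lat_abs_def by simp

lemma norm_abs_le: "lat_abs (y::'a::banach_lattice) \<le> S \<Longrightarrow> norm y \<le> norm S"
proof -
  assume a: "lat_abs y \<le> S"
  have "0 \<le> S" using abs_nonneg[of y] a by (rule order_trans)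
  then have "lat_abs S = S" by (rule abs_pos)
  with a have "sup y (- y) \<le> sup S (- S)" unfolding lat_abs_def by simp
  then show ?thesis by (rule norm_lattice_mono)
qed

lemma norm_mono_pos: "0 \<le> (x::'a::banach_lattice) \<Longrightarrow> x \<le> y \<Longrightarrow> norm x \<le> norm y"
proof -
  assume "0 \<le> x" "x \<le> y"
  then have "lat_abs x \<le> y" by (simp add: abs_pos)
  then show ?thesis by (rule norm_abs_le)
qed

lemma norm_abs: "norm (lat_abs (x::'a::banach_lattice)) = norm x"
proof -
  have "lat_abs (lat_abs x) = lat_abs x" by (simp add: abs_nonneg abs_pos)
  then have "sup (lat_abs x) (- lat_abs x) = sup x (- x)" unfolding lat_abs_def[of "lat_abs x"] by (simp add: lat_abs_def)
  then show ?thesis by (metis norm_lattice_mono order_refl order_antisym)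
qed

lemma abs_add: "lat_abs ((a::'a::banach_lattice) + b) \<le> lat_abs a + lat_abs b"
proof (rule abs_le)
  show "a + b \<le> lat_abs a + lat_abs b" by (intro add_mono abs_ge)
  have "- (a + b) = (- a) + (- b)" by simp
  also have "\<dots> \<le> lat_abs a + lat_abs b" by (intro add_mono abs_ge)
  finally show "- (a + b) \<le> lat_abs a + lat_abs b" .
qed

lemma abs_zero: "lat_abs (0::'a::banach_lattice) = 0"
  by (simp add: abs_pos)

lemma abs_sum: "lat_abs (\<Sum>i<(N::nat). (f i::'a::banach_lattice)) \<le> (\<Sum>i<N. lat_abs (f i))"
proof (induction N)
  case 0 then show ?case by (simp add: abs_zero)
next
  case (Suc N)
  have "lat_abs (\<Sum>i<Suc N. f i) \<le> lat_abs (\<Sum>i<N. f i) + lat_abs (f N)"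
    by (simp add: abs_add)
  also have "\<dots> \<le> (\<Sum>i<N. lat_abs (f i)) + lat_abs (f N)"
    using Suc by (simp add: add_right_mono)
  finally show ?case by simp
qed

lemma abs_scale: "0 \<le> (v::'a::banach_lattice) \<Longrightarrow> lat_abs (t *\<^sub>R v) \<le> \<bar>t\<bar> *\<^sub>R v"
proof (rule abs_le)
  assume v: "0 \<le> v"
  show "t *\<^sub>R v \<le> \<bar>t\<bar> *\<^sub>R v" by (rule scaleR_right_mono) (use v in auto)
  have "- (t *\<^sub>R v) = (- t) *\<^sub>R v" by simp
  also have "\<dots> \<le> \<bar>t\<bar> *\<^sub>R v" by (rule scaleR_right_mono) (use v in auto)
  finally show "- (t *\<^sub>R v) \<le> \<bar>t\<bar> *\<^sub>R v" .
qed

lemma inf_add_le: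
  assumes "0 \<le> (y::'a::banach_lattice)" "0 \<le> a" "0 \<le> z"
  shows "inf y (a + z) \<le> inf y a + inf y z"
proof -
  have eq: "inf y a + inf y z = inf (inf (y + y) (y + z)) (inf (a + y) (a + z))"
    by (simp add: add_inf_distrib_left add_inf_distrib_right inf_aci)
  have "y \<le> y + y" using assms(1) by simp
  moreover have "y \<le> y + z" using assms(3) by simp
  moreover have "y \<le> a + y" using assms(2) by simp
  ultimately have "inf y (a + z) \<le> inf (inf (y + y) (y + z)) (inf (a + y) (a + z))"
    by (meson inf.cobounded1 inf.cobounded2 le_inf_iff order_trans)
  then show ?thesis using eq by simp
qed

lemma inf_sum_le:
  assumes "0 \<le> (y::'a::banach_lattice)" "\<And>i. 0 \<le> a i"
  shows "inf y (\<Sum>i<(N::nat). a i) \<le> (\<Sum>i<N. inf y (a i))"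
proof (induction N)
  case 0 then show ?case using assms by simp
next
  case (Suc N)
  have "inf y (\<Sum>i<Suc N. a i) = inf y ((\<Sum>i<N. a i) + a N)" by simp
  also have "\<dots> \<le> inf y (\<Sum>i<N. a i) + inf y (a N)"
    using assms by (intro inf_add_le sum_nonneg) auto
  also have "\<dots> \<le> (\<Sum>i<N. inf y (a i)) + inf y (a N)"
    using Suc by (simp add: add_right_mono)
  finally show ?case by simp
qed

lemma disj_nat:
  assumes "0 \<le> (x::'a::banach_lattice)" "0 \<le> y" "inf x y = 0"
  shows "inf (real n *\<^sub>R x) y \<le> 0"
proof (induction n)
  case 0 then show ?case using assms by simp
next
  case (Suc n)
  have "inf (real (Suc n) *\<^sub>R x) y = inf y (real n *\<^sub>R x + x)"
    by (simp add: algebra_simps inf.commute)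
  also have "\<dots> \<le> inf y (real n *\<^sub>R x) + inf y x"
    using assms by (intro inf_add_le scaleR_nonneg_nonneg) auto
  also have "\<dots> \<le> 0" using Suc assms by (simp add: inf.commute add_nonpos_nonpos)
  finally show ?case .
qed

lemma disj_scale:
  assumes "0 \<le> (x::'a::banach_lattice)" "0 \<le> y" "inf x y = 0" "0 \<le> t"
  shows "inf (t *\<^sub>R x) y = 0"
proof -
  obtain n where n: "t \<le> real n" using real_arch_simple by blast
  have "t *\<^sub>R x \<le> real n *\<^sub>R x" using n assms by (intro scaleR_right_mono)
  then have "inf (t *\<^sub>R x) y \<le> inf (real n *\<^sub>R x) y" by (rule inf_mono) simp
  also have "\<dots> \<le> 0" by (rule disj_nat[OF assms(1-3)])
  finally have "inf (t *\<^sub>R x) y \<le> 0" .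
  moreover have "0 \<le> inf (t *\<^sub>R x) y" using assms by (simp add: scaleR_nonneg_nonneg)
  ultimately show ?thesis by (rule order_antisym)
qed

lemma pprt_nprt_disj: "inf (pprt c) (- nprt c) = (0::'a::banach_lattice)"
proof -
  have e1: "- nprt c = sup (- c) 0" by (simp add: nprt_def neg_inf_eq_sup)
  have "pprt c + (- nprt c) = sup (pprt c) (- nprt c) + inf (pprt c) (- nprt c)"
    by (rule add_eq_inf_sup)
  moreover have "pprt c + (- nprt c) = sup (pprt c) (- nprt c)"
  proof -
    have "sup c 0 + sup (- c) 0 = sup (sup c 0 + - c) (sup c 0 + 0)"
      by (rule add_sup_distrib_left)
    also have "sup c 0 + - c = sup (c + - c) (0 + - c)"
      by (rule add_sup_distrib_right)
    finally have "sup c 0 + sup (- c) 0 = sup (sup 0 (- c)) (sup c 0)" by simp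
    then have "sup c 0 + sup (- c) 0 = sup (sup c 0) (sup (- c) 0)"
      by (simp add: sup_aci)
    then show ?thesis unfolding e1 pprt_def .
  qed
  ultimately show ?thesis by simp
qed

lemma key_L3:
  assumes "0 \<le> (a::'a::banach_lattice)" "0 \<le> b" "0 < M"
  shows "M *\<^sub>R inf (pprt (a - M *\<^sub>R b)) b \<le> a"
proof -
  define c where "c = a - M *\<^sub>R b"
  define P where "P = pprt c"
  define N where "N = - nprt c"
  have P0: "0 \<le> P" and N0: "0 \<le> N" unfolding P_def N_def by auto
  have cPN: "c = P - N" unfolding P_def N_def using prts[of c] by simp
  define w where "w = inf P b"
  have w0: "0 \<le> w" unfolding w_def using P0 assms by simp
  have "M *\<^sub>R w \<le> M *\<^sub>R b" unfolding w_def using assms by (intro scaleR_left_mono) auto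
  also have "M *\<^sub>R b = a - c" unfolding c_def by simp
  also have "\<dots> \<le> a + N" using cPN P0 by simp
  finally have h1: "M *\<^sub>R w \<le> a + N" .
  have "M *\<^sub>R w \<le> M *\<^sub>R P" unfolding w_def using assms by (intro scaleR_left_mono) auto
  then have "inf (M *\<^sub>R w) N \<le> inf (M *\<^sub>R P) N" by (rule inf_mono) simp
  also have "inf (M *\<^sub>R P) N = 0"
    using disj_scale[OF P0 N0 _, of M] pprt_nprt_disj[of c] assms unfolding P_def N_def by simp
  finally have h2: "inf (M *\<^sub>R w) N \<le> 0" .
  have Mw0: "0 \<le> M *\<^sub>R w" using w0 assms by (simp add: scaleR_nonneg_nonneg)
  have "M *\<^sub>R w = inf (M *\<^sub>R w) (a + N)" using h1 by (simp add: inf.absorb1)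
  also have "\<dots> \<le> inf (M *\<^sub>R w) a + inf (M *\<^sub>R w) N"
    using Mw0 assms N0 by (intro inf_add_le)
  also have "\<dots> \<le> a + 0" using h2 by (intro add_mono) auto
  finally show ?thesis unfolding w_def P_def c_def by simp
qed

lemma weakly_null_crit:
  fixes v :: "nat \<Rightarrow> 'a::banach_lattice"
  assumes v0: "\<And>n. 0 \<le> v n" and bd: "\<And>N. norm (\<Sum>n<N. v n) \<le> C"
  shows "weakly_null v"
  unfolding weakly_null_def
proof
  fix g :: "'a \<Rightarrow>\<^sub>L real"
  define e where "e n = sgn (blinfun_apply g (v n))" for n
  have ps: "(\<Sum>n<N. \<bar>blinfun_apply g (v n)\<bar>) \<le> norm g * C" for N
  proof -
    have "(\<Sum>n<N. \<bar>blinfun_apply g (v n)\<bar>) = (\<Sum>n<N. blinfun_apply g (e n *\<^sub>R v n))"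
      unfolding e_def by (intro sum.cong refl) (simp add: blinfun.scaleR_right abs_sgn)
    also have "\<dots> = blinfun_apply g (\<Sum>n<N. e n *\<^sub>R v n)"
      by (simp add: blinfun.sum_right)
    also have "\<dots> \<le> norm g * norm (\<Sum>n<N. e n *\<^sub>R v n)"
      using norm_blinfun[of g "\<Sum>n<N. e n *\<^sub>R v n"] by simp
    also have "norm (\<Sum>n<N. e n *\<^sub>R v n) \<le> norm (\<Sum>n<N. v n)"
    proof (rule norm_abs_le)
      have "lat_abs (\<Sum>n<N. e n *\<^sub>R v n) \<le> (\<Sum>n<N. lat_abs (e n *\<^sub>R v n))" by (rule abs_sum)
      also have "\<dots> \<le> (\<Sum>n<N. v n)"
      proof (rule sum_mono)
        fix n assume "n \<in> {..<N}"
        have "lat_abs (e n *\<^sub>R v n) \<le> \<bar>e n\<bar> *\<^sub>R v n" by (rule abs_scale[OF v0])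
        also have "\<dots> \<le> 1 *\<^sub>R v n"
          by (rule scaleR_right_mono) (auto simp: e_def sgn_real_def v0)
        finally show "lat_abs (e n *\<^sub>R v n) \<le> v n" by simp
      qed
      finally show "lat_abs (\<Sum>n<N. e n *\<^sub>R v n) \<le> (\<Sum>n<N. v n)" .
    qed
    then have "norm g * norm (\<Sum>n<N. e n *\<^sub>R v n) \<le> norm g * C"
      using bd[of N] by (intro mult_left_mono) auto
    finally show ?thesis by simp
  qed
  have "summable (\<lambda>n. \<bar>blinfun_apply g (v n)\<bar>)"
    by (rule summableI_nonneg_bounded[where x="norm g * C"]) (use ps in auto)
  then have "(\<lambda>n. \<bar>blinfun_apply g (v n)\<bar>) \<longlonglongrightarrow> 0" by (rule summable_LIMSEQ_zero)
  then show "(\<lambda>n. blinfun_apply g (v n)) \<longlonglongrightarrow> 0" by (simp add: tendsto_rabs_zero_iff)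
qed

lemma dual_le_zero: "dual_le 0 f \<longleftrightarrow> (\<forall>x. 0 \<le> x \<longrightarrow> 0 \<le> blinfun_apply f x)"
  unfolding dual_le_def by simp

lemma pos_fun_abs:
  assumes "dual_le 0 f"
  shows "\<bar>blinfun_apply f x\<bar> \<le> blinfun_apply f (lat_abs x)"
proof -
  have p: "0 \<le> y \<Longrightarrow> 0 \<le> blinfun_apply f y" for y using assms by (simp add: dual_le_zero)
  have "0 \<le> blinfun_apply f (lat_abs x - x)" using abs_ge(1)[of x] by (intro p) simp
  moreover have "0 \<le> blinfun_apply f (lat_abs x - (- x))" using abs_ge(2)[of x]
    by (intro p) (simp only: diff_ge_0_iff_ge)
  ultimately show ?thesis by (simp add: blinfun.diff_right blinfun.add_right)
qed

lemma norming:
  fixes f :: "'a::banach_lattice \<Rightarrow>\<^sub>L real"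
  assumes "dual_le 0 f" "0 < e" "e \<le> norm f"
  shows "\<exists>z. 0 \<le> z \<and> norm z \<le> 1 \<and> e / 2 \<le> blinfun_apply f z"
proof (rule ccontr)
  assume "\<not> ?thesis"
  then have H: "0 \<le> z \<Longrightarrow> norm z \<le> 1 \<Longrightarrow> blinfun_apply f z < e / 2" for z by force
  have "\<bar>blinfun_apply f x\<bar> \<le> e / 2 * norm x" for x
  proof (cases "x = 0")
    case True then show ?thesis by simp
  next
    case False
    then have nx: "0 < norm x" by simp
    define z where "z = (1 / norm x) *\<^sub>R lat_abs x"
    have z0: "0 \<le> z" unfolding z_def using nx abs_nonneg[of x] by (simp add: scaleR_nonneg_nonneg)
    have "norm z = 1" unfolding z_def using nx by (simp add: norm_abs)
    then have "blinfun_apply f z < e / 2" using H z0 by simp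
    then have "blinfun_apply f (lat_abs x) < e / 2 * norm x"
      unfolding z_def using nx by (simp add: blinfun.scaleR_right field_simps)
    then show ?thesis using pos_fun_abs[OF assms(1), of x] by simp
  qed
  then have "norm f \<le> e / 2" using assms by (intro norm_blinfun_bound) (auto simp: mult.commute)
  then show False using assms by simp
qed

lemma inf_zero:
  fixes D :: "('a::banach_lattice \<Rightarrow>\<^sub>L real) set"
  assumes Dne: "D \<noteq> {}"
    and dir: "\<forall>x\<in>D. \<forall>y\<in>D. \<exists>z\<in>D. dual_le z x \<and> dual_le z y"
    and pos: "\<forall>x\<in>D. dual_le 0 x"
    and glb: "\<forall>l. (\<forall>x\<in>D. dual_le l x) \<longrightarrow> dual_le l 0"
    and s0: "0 \<le> s" and dpos: "0 < \<delta>"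
  shows "\<exists>\<phi>\<in>D. blinfun_apply \<phi> s < \<delta>"
proof (rule ccontr)
  assume "\<not> ?thesis"
  then have big: "\<phi> \<in> D \<Longrightarrow> \<delta> \<le> blinfun_apply \<phi> s" for \<phi> by force
  have P: "\<phi> \<in> D \<Longrightarrow> 0 \<le> x \<Longrightarrow> 0 \<le> blinfun_apply \<phi> x" for \<phi> x
    using pos by (simp add: dual_le_zero)
  obtain \<phi>0 where p0: "\<phi>0 \<in> D" using Dne by blast
  define L where "L x = Inf ((\<lambda>\<phi>. blinfun_apply \<phi> x) ` D)" for x
  have bdd: "0 \<le> x \<Longrightarrow> bdd_below ((\<lambda>\<phi>. blinfun_apply \<phi> x) ` D)" for x
    using P by (auto intro!: bdd_belowI[where m=0])
  have Lle: "0 \<le> x \<Longrightarrow> \<phi> \<in> D \<Longrightarrow> L x \<le> blinfun_apply \<phi> x" for x \<phi>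
    unfolding L_def by (rule cInf_lower) (use bdd in auto)
  have Lge: "(\<And>\<phi>. \<phi> \<in> D \<Longrightarrow> c \<le> blinfun_apply \<phi> x) \<Longrightarrow> c \<le> L x" for c x
    unfolding L_def by (rule cInf_greatest) (use Dne in auto)
  have L0: "0 \<le> x \<Longrightarrow> 0 \<le> L x" for x using P by (intro Lge) auto
  have Lapp: "0 \<le> x \<Longrightarrow> 0 < \<epsilon> \<Longrightarrow> \<exists>\<phi>\<in>D. blinfun_apply \<phi> x < L x + \<epsilon>" for x \<epsilon>
  proof -
    assume x: "0 \<le> x" and e: "0 < \<epsilon>"
    have "L x < L x + \<epsilon>" using e by simp
    then show ?thesis unfolding L_def[of x]
      using cInf_less_iff[of "(\<lambda>\<phi>. blinfun_apply \<phi> x) ` D" "L x + \<epsilon>"] Dne bdd[OF x]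
      unfolding L_def by auto
  qed
  have Ladd: "0 \<le> x \<Longrightarrow> 0 \<le> y \<Longrightarrow> L (x + y) = L x + L y" for x y
  proof (rule order_antisym)
    assume x: "0 \<le> x" and y: "0 \<le> y"
    show "L x + L y \<le> L (x + y)"
      using Lle x y by (intro Lge) (simp add: blinfun.add_right add_mono)
    show "L (x + y) \<le> L x + L y"
    proof (rule field_le_epsilon)
      fix \<epsilon> :: real assume e: "0 < \<epsilon>"
      obtain \<phi>1 where 1: "\<phi>1 \<in> D" "blinfun_apply \<phi>1 x < L x + \<epsilon>/2" using Lapp[OF x, of "\<epsilon>/2"] e by auto
      obtain \<phi>2 where 2: "\<phi>2 \<in> D" "blinfun_apply \<phi>2 y < L y + \<epsilon>/2" using Lapp[OF y, of "\<epsilon>/2"] e by auto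
      obtain \<phi>3 where 3: "\<phi>3 \<in> D" "dual_le \<phi>3 \<phi>1" "dual_le \<phi>3 \<phi>2" using dir 1 2 by blast
      have "L (x + y) \<le> blinfun_apply \<phi>3 (x + y)" using 3 x y by (intro Lle) auto
      also have "\<dots> = blinfun_apply \<phi>3 x + blinfun_apply \<phi>3 y" by (simp add: blinfun.add_right)
      also have "\<dots> \<le> blinfun_apply \<phi>1 x + blinfun_apply \<phi>2 y"
        using 3 x y unfolding dual_le_def by (intro add_mono) auto
      finally show "L (x + y) \<le> L x + L y + \<epsilon>" using 1 2 by simp
    qed
  qed
  have Lscale: "0 \<le> x \<Longrightarrow> 0 \<le> t \<Longrightarrow> L (t *\<^sub>R x) = t * L x" for x t
  proof (cases "t = 0")
    case True
    assume x: "0 \<le> x"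
    have "L 0 \<le> 0" using Lle[of 0 \<phi>0] p0 by simp
    then show ?thesis using True L0[of 0] by simp
  next
    case False
    assume x: "0 \<le> x" and t: "0 \<le> t"
    then have tp: "0 < t" using False by simp
    have tx: "0 \<le> t *\<^sub>R x" using x t by (simp add: scaleR_nonneg_nonneg)
    show ?thesis
    proof (rule order_antisym)
      have "L (t *\<^sub>R x) / t \<le> L x"
      proof (rule Lge)
        fix \<phi> assume "\<phi> \<in> D"
        then have "L (t *\<^sub>R x) \<le> t * blinfun_apply \<phi> x" using Lle[OF tx] by (simp add: blinfun.scaleR_right)
        then show "L (t *\<^sub>R x) / t \<le> blinfun_apply \<phi> x" using tp by (simp add: field_simps)
      qed
      then show "L (t *\<^sub>R x) \<le> t * L x" using tp by (simp add: field_simps)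
      show "t * L x \<le> L (t *\<^sub>R x)"
      proof (rule Lge)
        fix \<phi> assume "\<phi> \<in> D"
        then show "t * L x \<le> blinfun_apply \<phi> (t *\<^sub>R x)"
          using Lle[OF x] t by (simp add: blinfun.scaleR_right mult_left_mono)
      qed
    qed
  qed
  define l where "l x = L (pprt x) - L (- nprt x)" for x
  have N0: "0 \<le> - nprt x" for x :: 'a by simp
  have lrep: "0 \<le> p \<Longrightarrow> 0 \<le> n \<Longrightarrow> x = p - n \<Longrightarrow> l x = L p - L n" for x p n
  proof -
    assume p: "0 \<le> p" and n: "0 \<le> n" and x: "x = p - n"
    have "pprt x + n = ((pprt x + nprt x) + n) - nprt x" by (simp add: algebra_simps)
    also have "\<dots> = p + (- nprt x)" using prts[of x] x by simp
    finally have "pprt x + n = p + (- nprt x)" .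
    then have "L (pprt x + n) = L (p + (- nprt x))" by simp
    moreover have "L (pprt x + n) = L (pprt x) + L n" using Ladd[of "pprt x" n] n by simp
    moreover have "L (p + (- nprt x)) = L p + L (- nprt x)" using Ladd[OF p N0[of x]] .
    ultimately have "L (pprt x) + L n = L p + L (- nprt x)" by simp
    then show ?thesis unfolding l_def by simp
  qed
  have xrep: "x = pprt x - (- nprt x)" for x :: 'a using prts[of x] by simp
  have ladd: "l (x + y) = l x + l y" for x y
  proof -
    have "(pprt x + pprt y) - ((- nprt x) + (- nprt y)) = (pprt x + nprt x) + (pprt y + nprt y)"
      by (simp add: algebra_simps)
    also have "\<dots> = x + y" by (simp only: prts[symmetric])
    finally have e: "x + y = (pprt x + pprt y) - ((- nprt x) + (- nprt y))" by simp
    have "l (x + y) = L (pprt x + pprt y) - L ((- nprt x) + (- nprt y))"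
      by (rule lrep[OF add_nonneg_nonneg[OF zero_le_pprt zero_le_pprt] add_nonneg_nonneg[OF N0 N0] e])
    also have "\<dots> = l x + l y" unfolding l_def
      using Ladd[OF zero_le_pprt zero_le_pprt, of x y] Ladd[OF N0 N0, of x y] by simp
    finally show ?thesis .
  qed
  have lscale: "l (t *\<^sub>R x) = t *\<^sub>R l x" for t x
  proof (cases "0 \<le> t")
    case True
    have "t *\<^sub>R pprt x - t *\<^sub>R (- nprt x) = t *\<^sub>R (pprt x + nprt x)" by (simp add: algebra_simps)
    also have "\<dots> = t *\<^sub>R x" by (simp only: prts[symmetric])
    finally have e: "t *\<^sub>R x = t *\<^sub>R pprt x - t *\<^sub>R (- nprt x)" by simp
    have "l (t *\<^sub>R x) = L (t *\<^sub>R pprt x) - L (t *\<^sub>R (- nprt x))"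
      by (rule lrep[OF scaleR_nonneg_nonneg[OF True zero_le_pprt] scaleR_nonneg_nonneg[OF True N0] e])
    also have "\<dots> = t *\<^sub>R l x" unfolding l_def using Lscale[OF N0 True, of x] Lscale[OF zero_le_pprt True, of x]
      by (simp add: algebra_simps)
    finally show ?thesis .
  next
    case False
    then have t: "0 \<le> - t" by simp
    have "(- t) *\<^sub>R (- nprt x) - (- t) *\<^sub>R pprt x = t *\<^sub>R (pprt x + nprt x)" by (simp add: algebra_simps)
    also have "\<dots> = t *\<^sub>R x" by (simp only: prts[symmetric])
    finally have e: "t *\<^sub>R x = (- t) *\<^sub>R (- nprt x) - (- t) *\<^sub>R pprt x" by simp
    have "l (t *\<^sub>R x) = L ((- t) *\<^sub>R (- nprt x)) - L ((- t) *\<^sub>R pprt x)"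
      by (rule lrep[OF scaleR_nonneg_nonneg[OF t N0] scaleR_nonneg_nonneg[OF t zero_le_pprt] e])
    also have "\<dots> = t *\<^sub>R l x" unfolding l_def using Lscale[OF N0 t] Lscale[OF zero_le_pprt t] by (simp add: algebra_simps)
    finally show ?thesis .
  qed
  have lbd: "norm (l x) \<le> norm x * (2 * norm \<phi>0)" for x
  proof -
    have a: "0 \<le> pprt x" "pprt x \<le> lat_abs x"
      using abs_ge(1)[of x] abs_nonneg[of x] by (auto simp: pprt_def)
    have b: "0 \<le> - nprt x" "- nprt x \<le> lat_abs x"
      using abs_ge(2)[of x] abs_nonneg[of x] by (auto simp: nprt_def neg_inf_eq_sup)
    have na: "norm (pprt x) \<le> norm x" using norm_mono_pos[OF a] by (simp add: norm_abs)
    have nb: "norm (- nprt x) \<le> norm x" using norm_mono_pos[OF b] by (simp add: norm_abs)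
    have "L (pprt x) \<le> blinfun_apply \<phi>0 (pprt x)" using Lle a p0 by simp
    also have "\<dots> \<le> norm \<phi>0 * norm (pprt x)" using norm_blinfun[of \<phi>0 "pprt x"] by simp
    also have "\<dots> \<le> norm \<phi>0 * norm x" using na by (intro mult_left_mono) auto
    finally have 1: "L (pprt x) \<le> norm \<phi>0 * norm x" .
    have "L (- nprt x) \<le> blinfun_apply \<phi>0 (- nprt x)" using Lle b p0 by simp
    also have "\<dots> \<le> norm \<phi>0 * norm (- nprt x)" using norm_blinfun[of \<phi>0 "- nprt x"] by simp
    also have "\<dots> \<le> norm \<phi>0 * norm x" using nb by (intro mult_left_mono) auto
    finally have 2: "L (- nprt x) \<le> norm \<phi>0 * norm x" .
    have m: "norm x * (2 * norm \<phi>0) = 2 * (norm \<phi>0 * norm x)" by simp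
    show ?thesis unfolding l_def m using 1 2 L0[OF a(1)] L0[OF b(1)] by (simp add: abs_le_iff)
  qed
  have bl: "bounded_linear l" by (rule bounded_linear_intro[OF ladd lscale lbd])
  define lf where "lf = Blinfun l"
  have lfa: "blinfun_apply lf = l" unfolding lf_def using bl by (rule bounded_linear_Blinfun_apply)
  have lpos: "0 \<le> x \<Longrightarrow> l x = L x" for x
  proof -
    assume "0 \<le> x"
    then have "l x = L x - L 0" by (intro lrep) auto
    moreover have "L 0 = 0" using Lscale[of 0 0] by simp
    ultimately show ?thesis by simp
  qed
  have "\<forall>x\<in>D. dual_le lf x" unfolding dual_le_def lfa using lpos Lle by simp
  then have "dual_le lf 0" using glb by blast
  then have "l s \<le> 0" using s0 unfolding dual_le_def lfa by simp
  moreover have "\<delta> \<le> L s" using big by (intro Lge) auto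
  ultimately show False using lpos[OF s0] dpos by simp
qed

primrec Qs :: "(('a::banach_lattice \<Rightarrow>\<^sub>L real) \<Rightarrow> 'a \<Rightarrow> nat \<Rightarrow> ('a \<Rightarrow>\<^sub>L real) \<times> 'a)
    \<Rightarrow> ('a \<Rightarrow>\<^sub>L real) \<Rightarrow> nat \<Rightarrow> ('a \<Rightarrow>\<^sub>L real) \<times> 'a" where
  "Qs g p0 0 = (p0, 0)"
| "Qs g p0 (Suc n) = (fst (g (fst (Qs g p0 n)) (snd (Qs g p0 n)) n),
     snd (Qs g p0 n) + snd (g (fst (Qs g p0 n)) (snd (Qs g p0 n)) n))"

lemma geom_le: "(\<Sum>j<(N::nat). (1/2::real) ^ j) \<le> 2"
proof -
  have "(\<Sum>j<N. (1/2::real) ^ j) = 2 - 2 * (1/2) ^ N"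
    by (induction N) (auto simp: field_simps)
  then show ?thesis by simp
qed

lemma construct:
  fixes D :: "('a::banach_lattice \<Rightarrow>\<^sub>L real) set"
  assumes Dne: "D \<noteq> {}"
    and dir: "\<forall>x\<in>D. \<forall>y\<in>D. \<exists>z\<in>D. dual_le z x \<and> dual_le z y"
    and pos: "\<forall>x\<in>D. dual_le 0 x"
    and glb: "\<forall>l. (\<forall>x\<in>D. dual_le l x) \<longrightarrow> dual_le l 0"
    and e0: "0 < e" and big: "\<forall>\<phi>\<in>D. e \<le> norm \<phi>"
  shows "\<exists>(x :: nat \<Rightarrow> 'a) (f :: 'a \<Rightarrow>\<^sub>L real). (\<forall>n. norm (x n) \<le> 1) \<and> uaw_null x
     \<and> (\<forall>n. e / 4 \<le> blinfun_apply f (x n))"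
proof -
  define M where "M N = real (Suc N) * 2 ^ N" for N :: nat
  have Mpos: "0 < M N" for N unfolding M_def by simp
  have step: "\<exists>p. \<psi> \<in> D \<and> 0 \<le> s \<longrightarrow> (fst p \<in> D \<and> dual_le (fst p) \<psi> \<and>
      M N * blinfun_apply (fst p) s \<le> e / 4 \<and> 0 \<le> snd p \<and> norm (snd p) \<le> 1 \<and>
      e / 2 \<le> blinfun_apply (fst p) (snd p))" for \<psi> s N
  proof (cases "\<psi> \<in> D \<and> 0 \<le> s")
    case False then show ?thesis by (intro exI[of _ undefined] impI) (use False in simp)
  next
    case True
    then have psi: "\<psi> \<in> D" and s0: "0 \<le> s" by auto
    have dp: "0 < e / (4 * M N)" using e0 Mpos[of N] by simp
    obtain \<phi>' where 1: "\<phi>' \<in> D" "blinfun_apply \<phi>' s < e / (4 * M N)"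
      using inf_zero[OF Dne dir pos glb s0 dp] by (elim bexE)
    obtain \<phi> where 2: "\<phi> \<in> D" "dual_le \<phi> \<phi>'" "dual_le \<phi> \<psi>"
      using dir 1(1) psi by (elim ballE bexE conjE) auto
    have "blinfun_apply \<phi> s \<le> blinfun_apply \<phi>' s" using 2(2) s0 unfolding dual_le_def by simp
    then have "M N * blinfun_apply \<phi> s \<le> M N * (e / (4 * M N))"
      using 1(2) Mpos[of N] by (intro mult_left_mono) auto
    also have "\<dots> = e / 4" using Mpos[of N] by simp
    finally have 3: "M N * blinfun_apply \<phi> s \<le> e / 4" .
    have "dual_le 0 \<phi>" using pos 2(1) by simp
    moreover have "e \<le> norm \<phi>" using big 2(1) by simp
    ultimately have "\<exists>z. 0 \<le> z \<and> norm z \<le> 1 \<and> e / 2 \<le> blinfun_apply \<phi> z"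
      using norming[of \<phi> e] e0 by blast
    then obtain z where 4: "0 \<le> z" "norm z \<le> 1" "e / 2 \<le> blinfun_apply \<phi> z" by blast
    have "fst (\<phi>, z) \<in> D \<and> dual_le (fst (\<phi>, z)) \<psi> \<and>
      M N * blinfun_apply (fst (\<phi>, z)) s \<le> e / 4 \<and> 0 \<le> snd (\<phi>, z) \<and> norm (snd (\<phi>, z)) \<le> 1 \<and>
      e / 2 \<le> blinfun_apply (fst (\<phi>, z)) (snd (\<phi>, z))" using 2 3 4 by simp
    then show ?thesis by blast
  qed
  define P where "P \<psi> s N p \<longleftrightarrow> (\<psi> \<in> D \<and> 0 \<le> s \<longrightarrow> (fst p \<in> D \<and> dual_le (fst p) \<psi> \<and>
      M N * blinfun_apply (fst p) s \<le> e / 4 \<and> 0 \<le> snd p \<and> norm (snd p) \<le> 1 \<and>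
      e / 2 \<le> blinfun_apply (fst p) (snd p)))" for \<psi> s N p
  define g where "g \<psi> s N = (SOME p. P \<psi> s N p)" for \<psi> s N
  have g: "\<psi> \<in> D \<and> 0 \<le> s \<longrightarrow> (fst (g \<psi> s N) \<in> D \<and> dual_le (fst (g \<psi> s N)) \<psi> \<and>
      M N * blinfun_apply (fst (g \<psi> s N)) s \<le> e / 4 \<and> 0 \<le> snd (g \<psi> s N) \<and> norm (snd (g \<psi> s N)) \<le> 1 \<and>
      e / 2 \<le> blinfun_apply (fst (g \<psi> s N)) (snd (g \<psi> s N)))" for \<psi> s N
  proof -
    have "P \<psi> s N (g \<psi> s N)" unfolding g_def by (rule someI_ex) (use step in \<open>simp add: P_def\<close>)
    then show ?thesis unfolding P_def .
  qed
  obtain \<phi>0 where p0: "\<phi>0 \<in> D" using Dne by blast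
  define Q where "Q = Qs g \<phi>0"
  define A where "A n = fst (Q n)" for n
  define s where "s n = snd (Q n)" for n
  define ph where "ph n = fst (g (A n) (s n) n)" for n
  define z where "z n = snd (g (A n) (s n) n)" for n
  have QS: "A (Suc n) = ph n" "s (Suc n) = s n + z n" for n
    unfolding A_def s_def ph_def z_def Q_def by simp_all
  have Q0: "A 0 = \<phi>0" "s 0 = 0" unfolding A_def s_def Q_def by simp_all
  have dtrans: "dual_le a b \<Longrightarrow> dual_le b c \<Longrightarrow> dual_le a c" for a b c
    unfolding dual_le_def by force
  have inv: "A n \<in> D \<and> 0 \<le> s n \<and> dual_le (A n) \<phi>0" for n
  proof (induction n)
    case 0 then show ?case using Q0 p0 by (simp add: dual_le_def)
  next
    case (Suc n)
    then have "A n \<in> D \<and> 0 \<le> s n" by simp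
    note G = g[of "A n" "s n" n, THEN mp, OF this, folded ph_def z_def]
    show ?case using Suc G unfolding QS by (auto intro: dtrans add_nonneg_nonneg)
  qed
  have G: "ph n \<in> D \<and> dual_le (ph n) (A n) \<and> M n * blinfun_apply (ph n) (s n) \<le> e / 4 \<and>
      0 \<le> z n \<and> norm (z n) \<le> 1 \<and> e / 2 \<le> blinfun_apply (ph n) (z n)" for n
    using g[of "A n" "s n" n] inv[of n] unfolding ph_def z_def by blast
  have ssum: "s n = (\<Sum>k<n. z k)" for n
    by (induction n) (simp_all add: Q0 QS)
  define x where "x n = pprt (z n - M n *\<^sub>R s n)" for n
  have x0: "0 \<le> x n" for n unfolding x_def by simp
  have Ms0: "0 \<le> M n *\<^sub>R s n" for n using inv[of n] Mpos[of n] by (simp add: scaleR_nonneg_nonneg)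
  have xz: "x n \<le> z n" for n
  proof -
    have "x n \<le> pprt (z n)" unfolding x_def using Ms0[of n] by (intro pprt_mono) simp
    then show ?thesis using G[of n] by simp
  qed
  have xn: "norm (x n) \<le> 1" for n using norm_mono_pos[OF x0 xz, of n] G[of n] by simp
  have low: "e / 4 \<le> blinfun_apply \<phi>0 (x n)" for n
  proof -
    have d: "dual_le (ph n) \<phi>0" using G[of n] inv[of n] dtrans by blast
    have "blinfun_apply (ph n) (z n - M n *\<^sub>R s n) \<le> blinfun_apply (ph n) (x n)"
    proof -
      have "0 \<le> x n - (z n - M n *\<^sub>R s n)" unfolding x_def pprt_def by simp
      then have "0 \<le> blinfun_apply (ph n) (x n - (z n - M n *\<^sub>R s n))"
        using pos G[of n] by (simp add: dual_le_zero)
      then show ?thesis by (simp add: blinfun.diff_right)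
    qed
    moreover have "blinfun_apply (ph n) (z n - M n *\<^sub>R s n) =
        blinfun_apply (ph n) (z n) - M n * blinfun_apply (ph n) (s n)"
      by (simp add: blinfun.diff_right blinfun.scaleR_right)
    moreover have "blinfun_apply (ph n) (x n) \<le> blinfun_apply \<phi>0 (x n)"
      using d x0[of n] unfolding dual_le_def by simp
    ultimately show ?thesis using G[of n] by simp
  qed
  have uaw: "uaw_null x"
    unfolding uaw_null_def
  proof (intro allI impI)
    fix u :: 'a assume u0: "0 \<le> u"
    define v where "v n = inf (x n) u" for n
    have v0: "0 \<le> v n" for n unfolding v_def using x0[of n] u0 by simp
    define w where "w j = (real j / M j) *\<^sub>R z j" for j
    have w0: "0 \<le> w j" for j unfolding w_def using G[of j] Mpos[of j] by (simp add: scaleR_nonneg_nonneg)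
    have key: "inf (x N) (s N) \<le> (1 / M N) *\<^sub>R z N" for N
    proof -
      have "M N *\<^sub>R inf (x N) (s N) \<le> z N" unfolding x_def
        using key_L3[of "z N" "s N" "M N"] G[of N] inv[of N] Mpos[of N] by simp
      then have "(1 / M N) *\<^sub>R (M N *\<^sub>R inf (x N) (s N)) \<le> (1 / M N) *\<^sub>R z N"
        using Mpos[of N] by (intro scaleR_left_mono) auto
      then show ?thesis using Mpos[of N] by simp
    qed
    have ord: "(\<Sum>n<N. v n) \<le> u + (\<Sum>j<N. w j)" for N
    proof (induction N)
      case 0 then show ?case using u0 by simp
    next
      case (Suc N)
      define S where "S = (\<Sum>n<N. v n)"
      define W where "W = (\<Sum>j<N. w j)"
      have W0: "0 \<le> W" unfolding W_def using w0 by (simp add: sum_nonneg)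
      have "S + v N = sup S (v N) + inf S (v N)" by (rule add_eq_inf_sup)
      also have "sup S (v N) \<le> u + W"
      proof (rule le_supI)
        show "S \<le> u + W" using Suc unfolding S_def W_def .
        have "v N \<le> u" unfolding v_def by simp
        also have "u \<le> u + W" using W0 by simp
        finally show "v N \<le> u + W" .
      qed
      also have "inf S (v N) \<le> w N"
      proof -
        have "inf S (v N) = inf (v N) S" by (simp add: inf.commute)
        also have "\<dots> \<le> (\<Sum>i<N. inf (v N) (v i))" unfolding S_def by (rule inf_sum_le[OF v0 v0])
        also have "\<dots> \<le> (\<Sum>i<N. (1 / M N) *\<^sub>R z N)"
        proof (rule sum_mono)
          fix i assume i: "i \<in> {..<N}"
          have "v i \<le> s N"
          proof -
            have "v i \<le> x i" unfolding v_def by simp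
            also have "\<dots> \<le> z i" by (rule xz)
            also have "z i \<le> (\<Sum>k<N. z k)"
            proof -
              have "(\<Sum>k<N. z k) = z i + (\<Sum>k\<in>{..<N} - {i}. z k)"
                using i by (simp add: sum.remove)
              moreover have "0 \<le> (\<Sum>k\<in>{..<N} - {i}. z k)" using G by (simp add: sum_nonneg)
              ultimately show ?thesis by simp
            qed
            finally show ?thesis using ssum by simp
          qed
          moreover have "v N \<le> x N" unfolding v_def by simp
          ultimately have "inf (v N) (v i) \<le> inf (x N) (s N)" by (intro inf_mono)
          then show "inf (v N) (v i) \<le> (1 / M N) *\<^sub>R z N" using key[of N] by (rule order_trans)
        qed
        also have "\<dots> = w N" unfolding w_def sum_constant_scaleR by simp
        finally show ?thesis .
      qed
      finally show ?case unfolding S_def W_def by (simp add: add.assoc)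
    qed
    have nw: "norm (w j) \<le> (1/2) ^ j" for j
    proof -
      have "norm (w j) = real j / M j * norm (z j)" unfolding w_def using Mpos[of j] by simp
      also have "\<dots> \<le> real j / M j * 1"
      proof (rule mult_left_mono)
        show "norm (z j) \<le> 1" using G[of j] by blast
        show "0 \<le> real j / M j" using Mpos[of j] by simp
      qed
      also have "\<dots> \<le> real (Suc j) / M j"
        using Mpos[of j] by (simp add: divide_right_mono)
      also have "\<dots> = (1/2) ^ j" unfolding M_def by (simp add: power_one_over)
      finally show ?thesis .
    qed
    have bd: "norm (\<Sum>n<N. v n) \<le> norm u + 2" for N
    proof -
      have "norm (\<Sum>n<N. v n) \<le> norm (u + (\<Sum>j<N. w j))"
        by (rule norm_mono_pos[OF sum_nonneg ord]) (use v0 in auto)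
      also have "\<dots> \<le> norm u + norm (\<Sum>j<N. w j)" by (rule norm_triangle_ineq)
      also have "norm (\<Sum>j<N. w j) \<le> (\<Sum>j<N. norm (w j))" by (rule norm_sum)
      also have "\<dots> \<le> (\<Sum>j<N. (1/2) ^ j)" by (rule sum_mono) (use nw in auto)
      also have "\<dots> \<le> 2" by (rule geom_le)
      finally show ?thesis by simp
    qed
    have "weakly_null v" by (rule weakly_null_crit[OF v0 bd])
    then show "weakly_null (\<lambda>n. inf (lat_abs (x n)) u)"
      unfolding v_def using x0 by (simp add: abs_pos)
  qed
  show ?thesis using xn uaw low by blast
qed

lemma nontriv:
  assumes "\<not> oc_norm_rel ((\<le>) :: 'b::banach_lattice \<Rightarrow> 'b \<Rightarrow> bool)"
  shows "\<exists>y0::'b. y0 \<noteq> 0"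
proof (rule ccontr)
  assume "\<not> ?thesis"
  then have z: "\<And>y::'b. y = 0" by blast
  have "oc_norm_rel ((\<le>) :: 'b \<Rightarrow> 'b \<Rightarrow> bool)"
    unfolding oc_norm_rel_def
  proof (intro allI impI)
    fix D :: "'b set" and e :: real
    assume "D \<noteq> {} \<and> (\<forall>x\<in>D. \<forall>y\<in>D. \<exists>z\<in>D. z \<le> x \<and> z \<le> y)
      \<and> (\<forall>x\<in>D. 0 \<le> x) \<and> (\<forall>l. (\<forall>x\<in>D. l \<le> x) \<longrightarrow> l \<le> 0)" "0 < e"
    then obtain d where "d \<in> D" by blast
    moreover have "norm d < e" using z[of d] \<open>0 < e\<close> by simp
    ultimately show "\<exists>x\<in>D. norm x < e" by blast
  qed
  then show False using assms by simp
qed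

theorem theorem4p3:
  assumes "\<forall>T :: 'a::banach_lattice \<Rightarrow>\<^sub>L 'b::banach_lattice. weak_DP T \<longrightarrow> uaw_DP T"
  shows "dual_order_continuous_norm TYPE('a) \<or> order_continuous_norm TYPE('b)"
proof (rule ccontr)
  assume "\<not> ?thesis"
  then have nd: "\<not> oc_norm_rel (dual_le :: ('a \<Rightarrow>\<^sub>L real) \<Rightarrow> _ \<Rightarrow> bool)"
    and nb: "\<not> oc_norm_rel ((\<le>) :: 'b \<Rightarrow> 'b \<Rightarrow> bool)" by simp_all
  obtain y0 :: 'b where y0: "y0 \<noteq> 0" using nontriv[OF nb] by blast
  have "\<exists>D :: ('a \<Rightarrow>\<^sub>L real) set. \<not> ((D \<noteq> {} \<and> (\<forall>x\<in>D. \<forall>y\<in>D. \<exists>z\<in>D. dual_le z x \<and> dual_le z y)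
      \<and> (\<forall>x\<in>D. dual_le 0 x) \<and> (\<forall>l. (\<forall>x\<in>D. dual_le l x) \<longrightarrow> dual_le l 0))
      \<longrightarrow> (\<forall>e>0. \<exists>x\<in>D. norm x < e))"
    using nd unfolding oc_norm_rel_def by (simp only: not_all) 
  then obtain D :: "('a \<Rightarrow>\<^sub>L real) set" where
    HD0: "\<not> ((D \<noteq> {} \<and> (\<forall>x\<in>D. \<forall>y\<in>D. \<exists>z\<in>D. dual_le z x \<and> dual_le z y)
      \<and> (\<forall>x\<in>D. dual_le 0 x) \<and> (\<forall>l. (\<forall>x\<in>D. dual_le l x) \<longrightarrow> dual_le l 0))
      \<longrightarrow> (\<forall>e>0. \<exists>x\<in>D. norm x < e))" by blast
  have HD1: "(D \<noteq> {} \<and> (\<forall>x\<in>D. \<forall>y\<in>D. \<exists>z\<in>D. dual_le z x \<and> dual_le z y)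
      \<and> (\<forall>x\<in>D. dual_le 0 x) \<and> (\<forall>l. (\<forall>x\<in>D. dual_le l x) \<longrightarrow> dual_le l 0))
      \<and> \<not> (\<forall>e>0. \<exists>x\<in>D. norm x < e)" by (rule not_imp[THEN iffD1, OF HD0])
  note HD = conjunct1[OF HD1] and HE = conjunct2[OF HD1]
  from HD have Dne: "D \<noteq> {}"
    and dir: "\<forall>x\<in>D. \<forall>y\<in>D. \<exists>z\<in>D. dual_le z x \<and> dual_le z y"
    and pos: "\<forall>x\<in>D. dual_le 0 x"
    and glb: "\<forall>l. (\<forall>x\<in>D. dual_le l x) \<longrightarrow> dual_le l 0" by simp_all
  from HE obtain e where e0: "0 < e" and big0: "\<forall>x\<in>D. \<not> norm x < e" by auto
  have big: "\<forall>\<phi>\<in>D. e \<le> norm \<phi>" using big0 by (simp add: not_less)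
  obtain x :: "nat \<Rightarrow> 'a" and f :: "'a \<Rightarrow>\<^sub>L real" where
    xn: "\<forall>n. norm (x n) \<le> 1" and ux: "uaw_null x" and low: "\<forall>n. e / 4 \<le> blinfun_apply f (x n)"
    using construct[OF Dne dir pos glb e0 big] by (elim exE conjE)
  define t where "t v = blinfun_apply f v *\<^sub>R y0" for v
  have blt: "bounded_linear t" unfolding t_def
    by (rule bounded_linear_compose[OF bounded_linear_scaleR_left blinfun.bounded_linear_right])
  define T where "T = Blinfun t"
  have Ta: "blinfun_apply T = t" unfolding T_def using blt by (rule bounded_linear_Blinfun_apply)
  have wdp: "weak_DP T"
    unfolding weak_DP_def
  proof (intro allI impI)
    fix xs :: "nat \<Rightarrow> 'a" and fs :: "nat \<Rightarrow> ('b \<Rightarrow>\<^sub>L real)"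
    assume a: "weakly_null xs \<and> weakly_null fs"
    have 1: "(\<lambda>n. blinfun_apply f (xs n)) \<longlonglongrightarrow> 0" using a unfolding weakly_null_def by blast
    define ev where "ev = Blinfun (\<lambda>h :: 'b \<Rightarrow>\<^sub>L real. blinfun_apply h y0)"
    have evb: "bounded_linear (\<lambda>h :: 'b \<Rightarrow>\<^sub>L real. blinfun_apply h y0)"
      by (rule bounded_bilinear.bounded_linear_left[OF bounded_bilinear_blinfun_apply])
    have eva: "blinfun_apply ev = (\<lambda>h. blinfun_apply h y0)"
      unfolding ev_def using evb by (rule bounded_linear_Blinfun_apply)
    have "(\<lambda>n. blinfun_apply ev (fs n)) \<longlonglongrightarrow> 0" using a unfolding weakly_null_def by blast
    then have 2: "(\<lambda>n. blinfun_apply (fs n) y0) \<longlonglongrightarrow> 0" unfolding eva .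
    have "(\<lambda>n. blinfun_apply f (xs n) * blinfun_apply (fs n) y0) \<longlonglongrightarrow> 0"
      by (rule tendsto_mult_zero[OF 1 2])
    then show "(\<lambda>n. blinfun_apply (fs n) (blinfun_apply T (xs n))) \<longlonglongrightarrow> 0"
      unfolding Ta t_def by (simp add: blinfun.scaleR_right)
  qed
  have "uaw_DP T" using assms wdp by simp
  moreover have "bounded (range x)" unfolding bounded_iff using xn by blast
  ultimately have lim: "(\<lambda>n. norm (blinfun_apply T (x n))) \<longlonglongrightarrow> 0"
    using ux unfolding uaw_DP_def by blast
  have c: "0 < e / 4 * norm y0" using e0 y0 by simp
  have "eventually (\<lambda>n. norm (blinfun_apply T (x n)) < e / 4 * norm y0) sequentially"
    by (rule order_tendstoD(2)[OF lim c])
  then obtain n where n: "norm (blinfun_apply T (x n)) < e / 4 * norm y0"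
    by (auto simp: eventually_sequentially)
  have "norm (blinfun_apply T (x n)) = \<bar>blinfun_apply f (x n)\<bar> * norm y0"
    unfolding Ta t_def by simp
  moreover have "e / 4 * norm y0 \<le> \<bar>blinfun_apply f (x n)\<bar> * norm y0"
  proof (rule mult_right_mono)
    have "e / 4 \<le> blinfun_apply f (x n)" using low by blast
    then show "e / 4 \<le> \<bar>blinfun_apply f (x n)\<bar>" by linarith
  qed simp
  ultimately show False using n by simp
qed
end
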